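(* If $0\le p\le t=\frac12$, then bold play is optimal, i.e. $\pi(p,\frac12)=p+(1-p)p$, attained by $c_1=c_2=\frac12$, $c_i=0$ for $i\ge3$.
   Context: Let $\beta_1,\beta_2,\ldots$ be independent Bernoulli random variables with success probability $p$. A stake sequence is a sequence $\gamma=(c_1,c_2,\ldots)$ of non-negative reals with $c_1\ge c_2\ge\cdots$ and $\sum_i c_i=1$; write $S_\gamma=\sum_i c_i\beta_i$. For $0\le p\le t\le 1$ define $\pi(p,t)=\sup\{\mathbf P(S_\gamma\ge t)\mid \gamma \text{ a stake sequence}\}$. Bold play for threshold $t$ is the stake sequence with $c_i=\frac1m$ for $i\le m$ and $c_i=0$ for $i>m$, where $m=\lfloor 1/t\rfloor$; it is optimal if it attains $\pi(p,t)$. *)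

theory Defs
  imports "HOL-Probability.Probability"
begin

text \<open>Stake sequences are indexed from 0: c 0 \<ge> c 1 \<ge> ..., with sum 1.\<close>
definition stake_seq :: "(nat \<Rightarrow> real) \<Rightarrow> bool" where
  "stake_seq c \<longleftrightarrow> (\<forall>i. 0 \<le> c i) \<and> (\<forall>i. c (Suc i) \<le> c i) \<and> c sums 1"

definition bern_space :: "real \<Rightarrow> (nat \<Rightarrow> bool) measure" where
  "bern_space p = (\<Pi>\<^sub>M i\<in>(UNIV::nat set). measure_pmf (bernoulli_pmf p))"

definition S_stake :: "(nat \<Rightarrow> real) \<Rightarrow> (nat \<Rightarrow> bool) \<Rightarrow> real" where
  "S_stake c \<omega> = (\<Sum>i. c i * (if \<omega> i then 1 else 0))"

definition win_prob :: "real \<Rightarrow> (nat \<Rightarrow> real) \<Rightarrow> real \<Rightarrow> real" where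
  "win_prob p c t = measure (bern_space p) {\<omega> \<in> space (bern_space p). t \<le> S_stake c \<omega>}"

definition pi_opt :: "real \<Rightarrow> real \<Rightarrow> real" where
  "pi_opt p t = Sup {win_prob p c t | c. stake_seq c}"

definition bold_play :: "real \<Rightarrow> nat \<Rightarrow> real" where
  "bold_play t i = (let m = nat \<lfloor>1 / t\<rfloor> in if i < m then 1 / real m else 0)"

end

theory Submission
  imports Defs
begin

lemma cyc_card:
  fixes Sg :: "nat set" and m k :: nat
  assumes sub: "Sg \<subseteq> {0..<m}" and mk: "2*k \<le> m" and k0: "0 < k"
    and dis: "\<And>s s'. s \<in> Sg \<Longrightarrow> s' \<in> Sg \<Longrightarrow> s < s' \<Longrightarrow> k \<le> s' - s \<Longrightarrow> s' - s \<le> m - k \<Longrightarrow> False"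
  shows "card Sg \<le> k"
proof (cases "Sg = {}")
  case True then show ?thesis by simp
next
  case False
  have fin: "finite Sg" using sub finite_subset by blast
  define s0 where "s0 = Min Sg"
  have s0S: "s0 \<in> Sg" using fin False s0_def by simp
  have s0le: "\<And>s. s \<in> Sg \<Longrightarrow> s0 \<le> s" using fin s0_def by simp
  define g where "g = (\<lambda>s. if s - s0 < k then s - s0 else s - s0 - (m - k))"
  have hi: "\<And>s. s \<in> Sg \<Longrightarrow> \<not> s - s0 < k \<Longrightarrow> s - s0 > m - k"
  proof -
    fix s assume s: "s \<in> Sg" "\<not> s - s0 < k"
    show "s - s0 > m - k"
    proof (rule ccontr)
      assume "\<not> s - s0 > m - k"
      moreover have "s0 < s" using s k0 by linarith
      ultimately show False using dis[OF s0S s(1)] s by auto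
    qed
  qed
  have img: "g ` Sg \<subseteq> {0..<k}"
  proof
    fix y assume "y \<in> g ` Sg"
    then obtain s where s: "s \<in> Sg" "y = g s" by auto
    have "s < m" using s sub by auto
    then show "y \<in> {0..<k}" using s hi[OF s(1)] unfolding g_def by (auto split: if_splits)
  qed
  have inj: "inj_on g Sg"
  proof (rule inj_onI)
    fix a b assume a: "a \<in> Sg" and b: "b \<in> Sg" and e: "g a = g b"
    have am: "a < m" "b < m" using a b sub by auto
    have la: "s0 \<le> a" "s0 \<le> b" using s0le a b by auto
    show "a = b"
    proof (cases "a - s0 < k")
      case True note ta = True
      show ?thesis
      proof (cases "b - s0 < k")
        case True then show ?thesis using ta e la unfolding g_def by auto
      next
        case False
        have "b - s0 > m - k" using hi[OF b False] .
        have "a - s0 = b - s0 - (m-k)" using e ta False unfolding g_def by simp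
        then have "b - a = m - k \<and> a < b" using la \<open>b - s0 > m - k\<close> k0 mk by linarith
        moreover have "k \<le> m - k" using mk by linarith
        ultimately show ?thesis using dis[OF a b] by auto
      qed
    next
      case False note fa = False
      have ha: "a - s0 > m - k" using hi[OF a False] .
      show ?thesis
      proof (cases "b - s0 < k")
        case True
        have "b - s0 = a - s0 - (m-k)" using e fa True unfolding g_def by simp
        then have "a - b = m - k \<and> b < a" using la ha k0 mk by linarith
        moreover have "k \<le> m - k" using mk by linarith
        ultimately show ?thesis using dis[OF b a] by auto
      next
        case False
        have "b - s0 > m - k" using hi[OF b False] .
        moreover have "a - s0 - (m-k) = b - s0 - (m-k)" using e fa False unfolding g_def by simp
        ultimately show ?thesis using ha la by linarith
      qed
    qed
  qed
  have "card Sg = card (g ` Sg)" using inj by (simp add: card_image)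
  also have "\<dots> \<le> card {0..<k}" using img by (intro card_mono) auto
  finally show ?thesis by simp
qed

lemma card_J:
  fixes m s k :: nat
  assumes "s < m" "k \<le> m"
  shows "card {x\<in>{0..<m}. (x+s) mod m < k} = k"
proof -
  define f where "f = (\<lambda>x. (x + s) mod m)"
  have m0: "0 < m" using assms by auto
  have inj: "inj_on f {0..<m}"
  proof (rule inj_onI)
    fix x y assume "x \<in> {0..<m}" "y \<in> {0..<m}" "f x = f y"
    then have "(x + s) mod m = (y + s) mod m" "x < m" "y < m" by (auto simp: f_def)
    moreover have "(x + s) mod m = (if x + s < m then x + s else x + s - m)"
      using \<open>x < m\<close> assms(1) by (simp add: mod_if le_mod_geq)
    moreover have "(y + s) mod m = (if y + s < m then y + s else y + s - m)"
      using \<open>y < m\<close> assms(1) by (simp add: mod_if le_mod_geq)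
    ultimately show "x = y" by (auto split: if_splits)
  qed
  have img: "f ` {x\<in>{0..<m}. (x+s) mod m < k} = {0..<k}"
  proof
    show "f ` {x\<in>{0..<m}. (x+s) mod m < k} \<subseteq> {0..<k}" by (auto simp: f_def)
  next
    show "{0..<k} \<subseteq> f ` {x\<in>{0..<m}. (x+s) mod m < k}"
    proof
      fix y assume y: "y \<in> {0..<k}"
      define x where "x = (y + (m - s)) mod m"
      have xm: "x < m" using m0 by (simp add: x_def)
      have "f x = (y + (m - s) + s) mod m" by (simp add: f_def x_def mod_add_left_eq)
      also have "\<dots> = (y + m) mod m" using assms by simp
      also have "\<dots> = y" using y assms by simp
      finally have fx: "f x = y" .
      then show "y \<in> f ` {x\<in>{0..<m}. (x+s) mod m < k}" using xm y
        by (intro image_eqI[of _ _ x]) (auto simp: f_def)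
    qed
  qed
  have "card {x\<in>{0..<m}. (x+s) mod m < k} = card (f ` {x\<in>{0..<m}. (x+s) mod m < k})"
    by (rule card_image[symmetric]) (rule inj_on_subset[OF inj], auto)
  then show ?thesis using img by simp
qed

lemma ekr_nat:
  fixes I :: "nat set" and F :: "nat set set" and m k :: nat
  assumes fin: "finite I" and FI: "F \<subseteq> Pow I"
    and inter: "\<And>A B. A \<in> F \<Longrightarrow> B \<in> F \<Longrightarrow> A \<inter> B \<noteq> {}"
    and k0: "0 < k" and mk: "2*k \<le> m"
  shows "m * (\<Sum>A\<in>F. k ^ card A * (m-k) ^ (card I - card A)) \<le> k * m ^ card I"
proof -
  define X where "X = PiE I (\<lambda>_. {0..<m})"
  define As where "As = (\<lambda>u s. {i\<in>I. (u i + s) mod m < k})"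
  have finX: "finite X" unfolding X_def using fin by (simp add: finite_PiE)
  have cardX: "card X = m ^ card I" unfolding X_def using fin by (simp add: card_PiE)
  have finF: "finite F" using FI fin by (meson finite_Pow_iff finite_subset)
  have per_u: "card {s\<in>{0..<m}. As u s \<in> F} \<le> k" if u: "u \<in> X" for u
  proof (rule cyc_card[OF _ mk k0])
    show "{s \<in> {0..<m}. As u s \<in> F} \<subseteq> {0..<m}" by auto
  next
    fix s s' assume s: "s \<in> {s \<in> {0..<m}. As u s \<in> F}" and s': "s' \<in> {s \<in> {0..<m}. As u s \<in> F}"
      and lt: "s < s'" and d1: "k \<le> s' - s" and d2: "s' - s \<le> m - k"
    have "As u s \<inter> As u s' \<noteq> {}" using s s' inter by auto
    then obtain i where i1: "(u i + s) mod m < k" and i2: "(u i + s') mod m < k"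
      unfolding As_def by auto
    define y where "y = (u i + s) mod m"
    have eq: "u i + s' = (u i + s) + (s' - s)" using lt by simp
    have "(u i + s') mod m = (y + (s' - s)) mod m" unfolding y_def by (metis eq mod_add_left_eq)
    also have "\<dots> = y + (s' - s)" using i1 d2 mk unfolding y_def by (intro mod_less) linarith
    finally show False using i2 d1 by simp
  qed
  define N where "N = (\<Sum>A\<in>F. k ^ card A * (m-k) ^ (card I - card A))"
  have per_s: "card {u\<in>X. As u s \<in> F} = N" if s: "s < m" for s
  proof -
    define J where "J = {x\<in>{0..<m}. (x+s) mod m < k}"
    have cJ: "card J = k" unfolding J_def using s mk by (intro card_J) auto
    have Jsub: "J \<subseteq> {0..<m}" unfolding J_def by auto
    have cJ': "card ({0..<m} - J) = m - k" using cJ Jsub card_Diff_subset[of J "{0..<m}"]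
      by (simp add: finite_subset)
    have eq1: "{u\<in>X. As u s \<in> F} = (\<Union>A\<in>F. {u\<in>X. As u s = A})" by auto
    have "card {u\<in>X. As u s \<in> F} = (\<Sum>A\<in>F. card {u\<in>X. As u s = A})"
      unfolding eq1 using finF finX by (intro card_UN_disjoint) auto
    also have "\<dots> = N" unfolding N_def
    proof (rule sum.cong[OF refl])
      fix A assume A: "A \<in> F"
      then have AI: "A \<subseteq> I" using FI by auto
      have "{u\<in>X. As u s = A} = PiE I (\<lambda>i. if i \<in> A then J else {0..<m} - J)"
      proof (intro set_eqI iffI)
        fix u assume "u \<in> {u\<in>X. As u s = A}"
        then have uX: "u \<in> X" and uA: "As u s = A" by auto
        show "u \<in> PiE I (\<lambda>i. if i \<in> A then J else {0..<m} - J)"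
        proof (unfold PiE_iff, intro conjI ballI)
          fix i assume iI: "i \<in> I"
          have "u i < m" using uX iI by (auto simp: X_def PiE_iff)
          moreover have "i \<in> A \<longleftrightarrow> (u i + s) mod m < k" using uA iI by (auto simp: As_def)
          ultimately show "u i \<in> (if i \<in> A then J else {0..<m} - J)" by (auto simp: J_def)
        next
          show "u \<in> extensional I" using uX by (auto simp: X_def PiE_iff)
        qed
      next
        fix u assume u: "u \<in> PiE I (\<lambda>i. if i \<in> A then J else {0..<m} - J)"
        have uX: "u \<in> X" using u unfolding X_def PiE_iff J_def by (auto split: if_splits)
        have "As u s = A"
        proof (intro set_eqI iffI)
          fix i assume "i \<in> As u s"
          then have "i \<in> I" "(u i + s) mod m < k" by (auto simp: As_def)
          then show "i \<in> A" using u unfolding PiE_iff J_def by (auto split: if_splits)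
        next
          fix i assume "i \<in> A"
          then have "i \<in> I" using AI by auto
          then show "i \<in> As u s" using u \<open>i \<in> A\<close> unfolding PiE_iff J_def As_def by auto
        qed
        then show "u \<in> {u\<in>X. As u s = A}" using uX by auto
      qed
      then have "card {u\<in>X. As u s = A} = (\<Prod>i\<in>I. card (if i \<in> A then J else {0..<m} - J))"
        using fin by (simp add: card_PiE)
      also have "\<dots> = (\<Prod>i\<in>I. if i \<in> A then k else m - k)"
        by (rule prod.cong) (auto simp: cJ cJ')
      also have "\<dots> = (\<Prod>i\<in>I \<inter> {x. x \<in> A}. k) * (\<Prod>i\<in>I \<inter> - {x. x \<in> A}. m - k)"
        using fin by (rule prod.If_cases)
      also have "I \<inter> {x. x \<in> A} = A" using AI by auto
      also have "I \<inter> - {x. x \<in> A} = I - A" by auto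
      finally have "card {u\<in>X. As u s = A} = k ^ card A * (m-k) ^ card (I - A)" by simp
      moreover have "card (I - A) = card I - card A" using AI fin by (meson card_Diff_subset finite_subset)
      ultimately show "card {u\<in>X. As u s = A} = k ^ card A * (m-k) ^ (card I - card A)"
        by simp
    qed
    finally show ?thesis .
  qed
  have cnt: "\<And>S::'x set. \<And>P. finite S \<Longrightarrow> card {x\<in>S. P x} = (\<Sum>x\<in>S. if P x then 1 else 0)"
    by (simp add: sum.inter_filter[symmetric])
  have "m * N = (\<Sum>s\<in>{0..<m}. card {u\<in>X. As u s \<in> F})" using per_s by simp
  also have "\<dots> = (\<Sum>s\<in>{0..<m}. \<Sum>u\<in>X. if As u s \<in> F then 1 else 0)"
    using finX by (simp add: cnt)
  also have "\<dots> = (\<Sum>u\<in>X. \<Sum>s\<in>{0..<m}. if As u s \<in> F then 1 else 0)" by (rule sum.swap)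
  also have "\<dots> = (\<Sum>u\<in>X. card {s\<in>{0..<m}. As u s \<in> F})"
    by (intro sum.cong refl, subst cnt) auto
  also have "\<dots> \<le> (\<Sum>u\<in>X. k)" by (rule sum_mono) (rule per_u)
  also have "\<dots> = k * m ^ card I" using cardX by simp
  finally show ?thesis unfolding N_def .
qed


lemma ekr_rat:
  fixes I :: "nat set" and F :: "nat set set" and m k :: nat
  assumes fin: "finite I" and FI: "F \<subseteq> Pow I"
    and inter: "\<And>A B. A \<in> F \<Longrightarrow> B \<in> F \<Longrightarrow> A \<inter> B \<noteq> {}"
    and m0: "0 < m" and mk: "2*k \<le> m"
  shows "(\<Sum>A\<in>F. (k/m) ^ card A * (1 - k/m) ^ (card I - card A)) \<le> k/m"
proof (cases "k = 0")
  case True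
  have "(k/m) ^ card A * (1 - k/m) ^ (card I - card A) = 0" if A: "A \<in> F" for A
  proof -
    have "A \<noteq> {}" using inter[OF A A] by auto
    moreover have "finite A" using A FI fin by (meson PowD finite_subset subsetD)
    ultimately have "card A > 0" by auto
    then show ?thesis using True by simp
  qed
  then have "(\<Sum>A\<in>F. (k/m) ^ card A * (1 - k/m) ^ (card I - card A)) = 0"
    by (intro sum.neutral) auto
  then show ?thesis using True by simp
next
  case False
  then have k0: "0 < k" by simp
  have km: "k \<le> m" using mk by simp
  define n where "n = card I"
  have nat: "m * (\<Sum>A\<in>F. k ^ card A * (m-k) ^ (n - card A)) \<le> k * m ^ n"
    using ekr_nat[OF fin FI inter k0 mk] unfolding n_def .
  then have natr: "real m * (\<Sum>A\<in>F. real k ^ card A * real (m-k) ^ (n - card A)) \<le> real k * real m ^ n"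
    by (metis (mono_tags, lifting) of_nat_le_iff of_nat_mult of_nat_power of_nat_sum sum.cong)
  have trm: "(k/m) ^ card A * (1 - k/m) ^ (n - card A) = (real k ^ card A * real (m-k) ^ (n - card A)) / real m ^ n"
    if A: "A \<in> F" for A
  proof -
    have "card A \<le> n" unfolding n_def using A FI fin by (meson PowD card_mono subsetD)
    then have nn: "n = card A + (n - card A)" by simp
    have "1 - real k / real m = real (m - k) / real m" using km m0 by (simp add: field_simps of_nat_diff)
    then have "(k/m) ^ card A * (1 - k/m) ^ (n - card A) = real k ^ card A / real m ^ card A * (real (m-k) ^ (n - card A) / real m ^ (n - card A))"
      by (simp add: power_divide)
    also have "\<dots> = (real k ^ card A * real (m-k) ^ (n - card A)) / (real m ^ card A * real m ^ (n - card A))"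
      by simp
    also have "real m ^ card A * real m ^ (n - card A) = real m ^ n"
      by (subst nn) (simp add: power_add)
    finally show ?thesis .
  qed
  have "(\<Sum>A\<in>F. (k/m) ^ card A * (1 - k/m) ^ (n - card A)) = (\<Sum>A\<in>F. real k ^ card A * real (m-k) ^ (n - card A)) / real m ^ n"
    by (simp add: trm sum_divide_distrib)
  also have "\<dots> = (real m * (\<Sum>A\<in>F. real k ^ card A * real (m-k) ^ (n - card A))) / (real m * real m ^ n)"
    using m0 by simp
  also have "\<dots> \<le> (real k * real m ^ n) / (real m * real m ^ n)"
    by (intro divide_right_mono natr) simp
  also have "\<dots> = k / m" using m0 by simp
  finally show ?thesis unfolding n_def .
qed

lemma ekr_real:
  fixes I :: "nat set" and F :: "nat set set" and p :: real
  assumes fin: "finite I" and FI: "F \<subseteq> Pow I"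
    and inter: "\<And>A B. A \<in> F \<Longrightarrow> B \<in> F \<Longrightarrow> A \<inter> B \<noteq> {}"
    and p0: "0 \<le> p" and p1: "p \<le> 1/2"
  shows "(\<Sum>A\<in>F. p ^ card A * (1 - p) ^ (card I - card A)) \<le> p"
proof -
  define G where "G = (\<lambda>q::real. \<Sum>A\<in>F. q ^ card A * (1 - q) ^ (card I - card A))"
  define kk where "kk = (\<lambda>j::nat. nat \<lfloor>p * real (Suc j)\<rfloor>)"
  define r where "r = (\<lambda>j. real (kk j) / real (Suc j))"
  have kkr: "real (kk j) = of_int \<lfloor>p * real (Suc j)\<rfloor>" for j
    unfolding kk_def using p0 by simp
  have rle: "r j \<le> p" for j
  proof -
    have "real (kk j) \<le> p * real (Suc j)" using kkr[of j] by linarith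
    then show ?thesis unfolding r_def by (simp add: divide_le_eq)
  qed
  have rge: "p + - inverse (real (Suc j)) \<le> r j" for j
  proof -
    have "p * real (Suc j) - 1 \<le> real (kk j)" using kkr[of j] by linarith
    then have "(p * real (Suc j) - 1) / real (Suc j) \<le> r j" unfolding r_def
      by (intro divide_right_mono) auto
    moreover have "(p * real (Suc j) - 1) / real (Suc j) = p + - inverse (real (Suc j))"
      by (simp add: field_simps)
    ultimately show ?thesis by simp
  qed
  have rlim: "r \<longlonglongrightarrow> p"
    by (rule tendsto_sandwich[OF _ _ LIMSEQ_inverse_real_of_nat_add_minus tendsto_const])
       (use rle rge in auto)
  have Gr: "G (r j) \<le> r j" for j
  proof -
    have "2 * kk j \<le> Suc j"
    proof -
      have "real (kk j) \<le> p * real (Suc j)" using kkr[of j] by linarith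
      moreover have "2 * (p * real (Suc j)) \<le> real (Suc j)"
        using mult_right_mono[of "2*p" 1 "real (Suc j)"] p1 by simp
      ultimately have "2 * real (kk j) \<le> real (Suc j)" by linarith
      then show ?thesis by linarith
    qed
    then show ?thesis unfolding G_def r_def
      using ekr_rat[OF fin FI inter, of "Suc j" "kk j"] by simp
  qed
  have Gc: "(\<lambda>j. G (r j)) \<longlonglongrightarrow> G p"
    unfolding G_def by (intro tendsto_intros rlim)
  have "G p \<le> p" by (rule LIMSEQ_le[OF Gc rlim]) (use Gr in auto)
  then show ?thesis unfolding G_def .
qed

lemma space_bern[simp]: "space (bern_space p) = UNIV"
  unfolding bern_space_def by (simp add: space_PiM)

lemma cyl_measure:
  fixes p :: real and n :: nat and F :: "nat set set"
  assumes p0: "0 \<le> p" and p1: "p \<le> 1" and FI: "F \<subseteq> Pow {0..<n}"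
  shows "{\<omega> \<in> space (bern_space p). {i\<in>{0..<n}. \<omega> i} \<in> F} \<in> sets (bern_space p)"
    and "measure (bern_space p) {\<omega> \<in> space (bern_space p). {i\<in>{0..<n}. \<omega> i} \<in> F}
          = (\<Sum>A\<in>F. p ^ card A * (1-p) ^ (n - card A))"
proof -
  define M0 where "M0 = measure_pmf (bernoulli_pmf p)"
  interpret P: product_prob_space "\<lambda>_. M0" UNIV
    unfolding M0_def by unfold_locales
  have BS: "bern_space p = PiM UNIV (\<lambda>_. M0)" unfolding bern_space_def M0_def by simp
  define E where "E = (\<lambda>A. prod_emb UNIV (\<lambda>_. M0) {0..<n} (PiE {0..<n} (\<lambda>i. {i \<in> A})))"
  have memE: "\<omega> \<in> E A \<longleftrightarrow> (\<forall>i\<in>{0..<n}. \<omega> i = (i \<in> A))" for \<omega> A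
    unfolding E_def prod_emb_def by (auto simp: PiE_iff M0_def)
  have finF: "finite F" using FI by (meson finite_Pow_iff finite_atLeastLessThan finite_subset)
  have setE: "E A \<in> sets (bern_space p)" for A
    unfolding E_def BS by (intro sets_PiM_I) (auto simp: M0_def)
  have eq: "{\<omega> \<in> space (bern_space p). {i\<in>{0..<n}. \<omega> i} \<in> F} = (\<Union>A\<in>F. E A)"
  proof (intro set_eqI iffI)
    fix \<omega> assume "\<omega> \<in> {\<omega> \<in> space (bern_space p). {i\<in>{0..<n}. \<omega> i} \<in> F}"
    then have "{i\<in>{0..<n}. \<omega> i} \<in> F" by simp
    moreover have "\<omega> \<in> E {i\<in>{0..<n}. \<omega> i}" by (simp add: memE)
    ultimately show "\<omega> \<in> (\<Union>A\<in>F. E A)" by blast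
  next
    fix \<omega> assume "\<omega> \<in> (\<Union>A\<in>F. E A)"
    then obtain A where A: "A \<in> F" "\<omega> \<in> E A" by blast
    have AI: "A \<subseteq> {0..<n}" using A FI by auto
    have "{i\<in>{0..<n}. \<omega> i} = A" using A(2) AI memE by auto
    then show "\<omega> \<in> {\<omega> \<in> space (bern_space p). {i\<in>{0..<n}. \<omega> i} \<in> F}" using A by simp
  qed
  show "{\<omega> \<in> space (bern_space p). {i\<in>{0..<n}. \<omega> i} \<in> F} \<in> sets (bern_space p)"
    unfolding eq using finF setE by (intro sets.finite_UN) auto
  have disj: "disjoint_family_on E F"
  proof (unfold disjoint_family_on_def, intro ballI impI)
    fix A B assume A: "A \<in> F" and B: "B \<in> F" and ne: "A \<noteq> B"
    show "E A \<inter> E B = {}"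
    proof (rule ccontr)
      assume "E A \<inter> E B \<noteq> {}"
      then obtain \<omega> where "\<omega> \<in> E A" "\<omega> \<in> E B" by blast
      then have "\<forall>i\<in>{0..<n}. (i \<in> A) = (i \<in> B)" using memE by auto
      then have "A = B" using A B FI by auto
      then show False using ne by simp
    qed
  qed
  have mE: "measure (bern_space p) (E A) = p ^ card A * (1-p) ^ (n - card A)" if A: "A \<in> F" for A
  proof -
    have AI: "A \<subseteq> {0..<n}" using A FI by auto
    have "measure (bern_space p) (E A) = (\<Prod>i\<in>{0..<n}. measure M0 {i \<in> A})"
      unfolding BS E_def by (rule P.measure_PiM_emb) (auto simp: M0_def)
    also have "\<dots> = (\<Prod>i\<in>{0..<n}. if i \<in> A then p else 1 - p)"
      by (rule prod.cong) (auto simp: M0_def measure_pmf_single p0 p1)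
    also have "\<dots> = (\<Prod>i\<in>{0..<n} \<inter> {x. x \<in> A}. p) * (\<Prod>i\<in>{0..<n} \<inter> - {x. x \<in> A}. 1 - p)"
      by (rule prod.If_cases) simp
    also have "{0..<n} \<inter> {x. x \<in> A} = A" using AI by auto
    also have "{0..<n} \<inter> - {x. x \<in> A} = {0..<n} - A" by auto
    finally have "measure (bern_space p) (E A) = p ^ card A * (1-p) ^ card ({0..<n} - A)" by simp
    moreover have "card ({0..<n} - A) = n - card A" using AI by (simp add: card_Diff_subset finite_subset)
    ultimately show ?thesis by simp
  qed
  have "measure (bern_space p) (\<Union>A\<in>F. E A) = (\<Sum>A\<in>F. measure (bern_space p) (E A))"
    unfolding BS using finF setE disj unfolding BS by (intro P.finite_measure_finite_Union) auto
  also have "\<dots> = (\<Sum>A\<in>F. p ^ card A * (1-p) ^ (n - card A))" by (rule sum.cong) (auto simp: mE)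
  finally show "measure (bern_space p) {\<omega> \<in> space (bern_space p). {i\<in>{0..<n}. \<omega> i} \<in> F}
          = (\<Sum>A\<in>F. p ^ card A * (1-p) ^ (n - card A))" unfolding eq .
qed

lemma main_bound:
  fixes p :: real and c :: "nat \<Rightarrow> real"
  assumes sc: "stake_seq c" and p0: "0 \<le> p" and p1: "p \<le> 1/2"
  shows "win_prob p c (1/2) \<le> p + (1-p) * p"
proof -
  have cnn: "\<And>i. 0 \<le> c i" and cdec: "\<And>i. c (Suc i) \<le> c i" and csum: "c sums 1"
    using sc unfolding stake_seq_def by auto
  have summ: "summable c" using csum by (simp add: sums_summable)
  have suminf1: "suminf c = 1" using csum by (simp add: sums_unique[symmetric])
  have dec: "decseq c" using cdec by (simp add: decseq_SucI)
  have c0: "0 < c 0"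
  proof (rule ccontr)
    assume "\<not> 0 < c 0"
    then have "\<And>i. c i = 0" using dec cnn by (metis decseqD le_zero_eq antisym not_less zero_le)
    then have "c = (\<lambda>_. 0)" by auto
    then have "suminf c = 0" by simp
    then show False using suminf1 by simp
  qed
  obtain N where N: "\<And>n. n \<ge> N \<Longrightarrow> norm (\<Sum>i. c (i + n)) < c 0"
    using suminf_exist_split[OF c0 summ] by blast
  define n where "n = max N 1"
  have n1: "1 \<le> n" and nN: "N \<le> n" unfolding n_def by auto
  define t where "t = (\<Sum>i. c (i + n))"
  have summt: "summable (\<lambda>i. c (i + n))" using summ by (simp add: summable_iff_shift)
  have t0: "0 \<le> t" unfolding t_def using summt cnn by (simp add: suminf_nonneg)
  have tc: "t < c 0" using N[OF nN] t0 unfolding t_def by simp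
  have split1: "1 = t + (\<Sum>i<n. c i)" using suminf_split_initial_segment[OF summ, of n] suminf1
    unfolding t_def by simp
  define w where "w = (\<lambda>A::nat set. p ^ card A * (1-p) ^ (n - card A))"
  define G where "G = {A. A \<subseteq> {0..<n} \<and> 1/2 - t \<le> (\<Sum>i\<in>A. c i)}"
  have GP: "G \<subseteq> Pow {0..<n}" unfolding G_def by auto
  have finG: "finite G" using GP by (meson finite_Pow_iff finite_atLeastLessThan finite_subset)
  have trunc: "S_stake c \<omega> \<le> (\<Sum>i\<in>{i\<in>{0..<n}. \<omega> i}. c i) + t" for \<omega>
  proof -
    define f where "f = (\<lambda>i. c i * (if \<omega> i then 1 else 0))"
    have f_le: "\<And>i. f i \<le> c i" and f_ge: "\<And>i. 0 \<le> f i" unfolding f_def using cnn by auto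
    have sf: "summable f"
      by (rule summable_comparison_test'[where g=c and N=0]) (use f_le f_ge summ in auto)
    have sft: "summable (\<lambda>i. f (i + n))" using sf by (simp add: summable_iff_shift)
    have "S_stake c \<omega> = (\<Sum>i. f (i + n)) + (\<Sum>i<n. f i)"
      unfolding S_stake_def f_def[symmetric] by (rule suminf_split_initial_segment[OF sf])
    also have "(\<Sum>i. f (i + n)) \<le> t" unfolding t_def using f_le sft summt by (intro suminf_le) auto
    also have "(\<Sum>i<n. f i) = (\<Sum>i\<in>{i\<in>{0..<n}. \<omega> i}. c i)"
      unfolding f_def by (subst sum.inter_filter) (auto simp: lessThan_atLeast0 intro!: sum.cong)
    finally show ?thesis by simp
  qed
  have sub: "{\<omega> \<in> space (bern_space p). 1/2 \<le> S_stake c \<omega>}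
      \<subseteq> {\<omega> \<in> space (bern_space p). {i\<in>{0..<n}. \<omega> i} \<in> G}"
  proof (intro subsetI)
    fix \<omega> assume "\<omega> \<in> {\<omega> \<in> space (bern_space p). 1/2 \<le> S_stake c \<omega>}"
    then have "1/2 \<le> S_stake c \<omega>" by simp
    then have "1/2 - t \<le> (\<Sum>i\<in>{i\<in>{0..<n}. \<omega> i}. c i)" using trunc[of \<omega>] by linarith
    then have "{i\<in>{0..<n}. \<omega> i} \<in> G" unfolding G_def by auto
    then show "\<omega> \<in> {\<omega> \<in> space (bern_space p). {i\<in>{0..<n}. \<omega> i} \<in> G}" by simp
  qed
  interpret PS: prob_space "bern_space p"
    unfolding bern_space_def by (intro prob_space_PiM prob_space_measure_pmf)
  have "win_prob p c (1/2) \<le> measure (bern_space p) {\<omega> \<in> space (bern_space p). {i\<in>{0..<n}. \<omega> i} \<in> G}"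
    unfolding win_prob_def using cyl_measure(1)[OF p0 _ GP] p1 by (intro PS.finite_measure_mono[OF sub]) auto
  also have "\<dots> = (\<Sum>A\<in>G. w A)" unfolding w_def using cyl_measure(2)[OF p0 _ GP] p1 by simp
  also have "\<dots> = (\<Sum>A\<in>{A\<in>G. 0 \<in> A}. w A) + (\<Sum>A\<in>{A\<in>G. 0 \<notin> A}. w A)"
  proof -
    have "(\<Sum>A\<in>G. w A) = (\<Sum>A\<in>G. (if 0 \<in> A then w A else 0) + (if 0 \<notin> A then w A else 0))"
      by (rule sum.cong) auto
    also have "\<dots> = (\<Sum>A\<in>G. if 0 \<in> A then w A else 0) + (\<Sum>A\<in>G. if 0 \<notin> A then w A else 0)"
      by (rule sum.distrib)
    also have "\<dots> = (\<Sum>A\<in>{A\<in>G. 0 \<in> A}. w A) + (\<Sum>A\<in>{A\<in>G. 0 \<notin> A}. w A)"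
      using finG by (simp add: sum.inter_filter)
    finally show ?thesis .
  qed
  also have "(\<Sum>A\<in>{A\<in>G. 0 \<in> A}. w A) \<le> p"
  proof -
    have GP1: "{A\<in>G. 0 \<in> A} \<subseteq> Pow {0..<n}" using GP by auto
    have "(\<Sum>A\<in>{A\<in>G. 0 \<in> A}. w A) = measure (bern_space p) {\<omega> \<in> space (bern_space p). {i\<in>{0..<n}. \<omega> i} \<in> {A\<in>G. 0 \<in> A}}"
      unfolding w_def using cyl_measure(2)[OF p0 _ GP1] p1 by simp
    also have "\<dots> \<le> measure (bern_space p) {\<omega> \<in> space (bern_space p). {i\<in>{0..<1}. \<omega> i} \<in> {{0}}}"
    proof (rule PS.finite_measure_mono)
      show "{\<omega> \<in> space (bern_space p). {i\<in>{0..<1}. \<omega> i} \<in> {{0::nat}}} \<in> sets (bern_space p)"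
        using cyl_measure(1)[OF p0, where n=1 and F="{{0}}"] p1 by auto
      show "{\<omega> \<in> space (bern_space p). {i\<in>{0..<n}. \<omega> i} \<in> {A\<in>G. 0 \<in> A}}
          \<subseteq> {\<omega> \<in> space (bern_space p). {i\<in>{0..<1}. \<omega> i} \<in> {{0}}}"
        using n1 by auto
    qed
    also have "\<dots> = p" using cyl_measure(2)[OF p0, where n=1 and F="{{0}}"] p1 by simp
    finally show ?thesis .
  qed
  also have "(\<Sum>A\<in>{A\<in>G. 0 \<notin> A}. w A) \<le> (1-p) * p"
  proof -
    define G0 where "G0 = {A\<in>G. 0 \<notin> A}"
    have G0P: "G0 \<subseteq> Pow {1..<n}"
    proof
      fix A assume "A \<in> G0"
      then have "A \<subseteq> {0..<n}" "0 \<notin> A" unfolding G0_def G_def by auto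
      then show "A \<in> Pow {1..<n}" by (auto simp: subset_iff Suc_le_eq intro: gr0I)
    qed
    have s0: "(\<Sum>i<n. c i) = c 0 + (\<Sum>i\<in>{1..<n}. c i)"
      using n1 by (simp add: lessThan_atLeast0 sum.atLeast_Suc_lessThan)
    have inter: "A \<inter> B \<noteq> {}" if A: "A \<in> G0" and B: "B \<in> G0" for A B
    proof
      assume AB: "A \<inter> B = {}"
      have AI: "A \<subseteq> {1..<n}" "B \<subseteq> {1..<n}" using A B G0P by auto
      have "(\<Sum>i\<in>A \<union> B. c i) = (\<Sum>i\<in>A. c i) + (\<Sum>i\<in>B. c i)"
        using AB AI by (intro sum.union_disjoint) (auto intro: finite_subset)
      also have "\<dots> \<ge> 1 - 2 * t" using A B unfolding G0_def G_def by auto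
      finally have "1 - 2*t \<le> (\<Sum>i\<in>A \<union> B. c i)" .
      also have "\<dots> \<le> (\<Sum>i\<in>{1..<n}. c i)" using AI cnn by (intro sum_mono2) auto
      finally show False using s0 split1 tc by linarith
    qed
    have cardI: "card {1..<n} = n - 1" by simp
    have "(\<Sum>A\<in>G0. w A) = (1-p) * (\<Sum>A\<in>G0. p ^ card A * (1-p) ^ (card {1..<n} - card A))"
      unfolding sum_distrib_left
    proof (rule sum.cong[OF refl])
      fix A assume A: "A \<in> G0"
      then have "A \<subseteq> {1..<n}" using G0P by auto
      then have "card A \<le> n - 1" by (metis cardI card_mono finite_atLeastLessThan)
      then have "n - card A = Suc (n - 1 - card A)" using n1 by simp
      then show "w A = (1-p) * (p ^ card A * (1-p) ^ (card {1..<n} - card A))"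
        unfolding w_def cardI by simp
    qed
    also have "\<dots> \<le> (1-p) * p"
      using p1 by (intro mult_left_mono ekr_real[OF _ G0P inter p0 p1]) auto
    finally show ?thesis unfolding G0_def .
  qed
  finally show ?thesis by simp
qed

theorem corollary18:
  fixes p :: real
  assumes "0 \<le> p" and "p \<le> 1/2"
  shows "bold_play (1/2) = (\<lambda>i. if i < 2 then 1/2 else 0)
    \<and> stake_seq (bold_play (1/2))
    \<and> win_prob p (bold_play (1/2)) (1/2) = pi_opt p (1/2)
    \<and> pi_opt p (1/2) = p + (1 - p) * p"
proof -
  note p0 = assms(1) and p1 = assms(2)
  define b :: "nat \<Rightarrow> real" where "b = (\<lambda>i. if i < 2 then 1/2 else 0)"
  have n2: "nat \<lfloor>1 / (1/2::real)\<rfloor> = 2" by simp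
  have bp: "bold_play (1/2) = b" unfolding bold_play_def b_def Let_def n2
    apply (rule ext)
    apply (simp only: of_nat_numeral)
    done
  have bsums: "b sums 1"
  proof -
    have "b sums (\<Sum>i\<in>{0..<2}. b i)" by (rule sums_finite) (auto simp: b_def)
    moreover have "(\<Sum>i\<in>{0..<2::nat}. b i) = 1" by (simp add: b_def numeral_2_eq_2)
    ultimately show ?thesis by simp
  qed
  have bss: "stake_seq b" unfolding stake_seq_def using bsums by (auto simp: b_def)
  have Sb: "S_stake b \<omega> = (if \<omega> 0 then 1/2 else 0) + (if \<omega> 1 then 1/2 else 0)" for \<omega>
  proof -
    have "(\<lambda>i. b i * (if \<omega> i then 1 else 0)) sums (\<Sum>i\<in>{0..<2}. b i * (if \<omega> i then 1 else 0))"
      by (rule sums_finite) (auto simp: b_def)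
    then have "S_stake b \<omega> = (\<Sum>i\<in>{0..<2}. b i * (if \<omega> i then 1 else 0))"
      unfolding S_stake_def by (simp add: sums_unique[symmetric])
    also have "\<dots> = (if \<omega> 0 then 1/2 else 0) + (if \<omega> 1 then 1/2 else 0)"
      by (simp add: b_def numeral_2_eq_2)
    finally show ?thesis .
  qed
  have FP: "{{0::nat}, {1}, {0, 1}} \<subseteq> Pow {0..<2}" by auto
  have key: "({i\<in>{0..<2}. \<omega> i} \<in> {{0::nat}, {1}, {0, 1}}) \<longleftrightarrow> \<omega> 0 \<or> \<omega> 1" for \<omega> :: "nat \<Rightarrow> bool"
  proof
    assume "{i\<in>{0..<2}. \<omega> i} \<in> {{0::nat}, {1}, {0, 1}}"
    then have "{i\<in>{0..<2}. \<omega> i} \<noteq> {}" by auto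
    then obtain i where "i < 2" "\<omega> i" by auto
    then show "\<omega> 0 \<or> \<omega> 1" using less_2_cases[of i] by auto
  next
    assume h: "\<omega> 0 \<or> \<omega> 1"
    have "{i\<in>{0..<2}. \<omega> i} = (if \<omega> 0 then {0} else {}) \<union> (if \<omega> 1 then {1} else {})"
    proof (rule set_eqI)
      fix x
      show "x \<in> {i\<in>{0..<2}. \<omega> i} \<longleftrightarrow> x \<in> (if \<omega> 0 then {0} else {}) \<union> (if \<omega> 1 then {1} else {})"
      proof (cases "x < 2")
        case True
        then have "x = 0 \<or> x = 1" using less_2_cases by auto
        then show ?thesis by auto
      next
        case False
        then show ?thesis by auto
      qed
    qed
    then show "{i\<in>{0..<2}. \<omega> i} \<in> {{0::nat}, {1}, {0, 1}}" using h by (cases "\<omega> 0"; cases "\<omega> 1") simp_all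
  qed
  have key2: "1/2 \<le> S_stake b \<omega> \<longleftrightarrow> \<omega> 0 \<or> \<omega> 1" for \<omega>
    unfolding Sb by (cases "\<omega> 0"; cases "\<omega> 1") simp_all
  have ev: "{\<omega> \<in> space (bern_space p). 1/2 \<le> S_stake b \<omega>}
      = {\<omega> \<in> space (bern_space p). {i\<in>{0..<2}. \<omega> i} \<in> {{0}, {1}, {0, 1}}}"
    by (simp only: key key2)
  have wb: "win_prob p b (1/2) = p + (1-p) * p"
  proof -
    have "win_prob p b (1/2) = (\<Sum>A\<in>{{0::nat}, {1}, {0, 1}}. p ^ card A * (1-p) ^ (2 - card A))"
      unfolding win_prob_def ev by (rule cyl_measure(2)[OF p0 _ FP]) (use p1 in linarith)
    also have "\<dots> = p + (1-p) * p" by (simp add: algebra_simps power2_eq_square)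
    finally show ?thesis .
  qed
  have le: "win_prob p c (1/2) \<le> p + (1-p) * p" if "stake_seq c" for c
    using main_bound[OF that p0 p1] .
  have pio: "pi_opt p (1/2) = p + (1-p) * p"
    unfolding pi_opt_def
  proof (rule cSup_eq_maximum)
    show "p + (1-p) * p \<in> {win_prob p c (1/2) | c. stake_seq c}" using bss wb by force
    show "\<And>x. x \<in> {win_prob p c (1/2) | c. stake_seq c} \<Longrightarrow> x \<le> p + (1-p) * p" using le by blast
  qed
  show ?thesis using bp bss wb pio unfolding b_def by simp
qed

end
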